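(* For all $\lambda>0$ and all even $L\ge2$, $$Z^{\mathrm{per}}_{R_{2\times L},\lambda}(E)\ge\Big(1+\tfrac12\lambda^{-1/2}\Big)^L,$$ where $E$ is the event that every tile has even horizontal parity (equivalently, $\sigma(x,y)=1$ implies $x$ odd).
   Context: Tiles: $T_{(x,y)}=[x-1,x+1]\times[y-1,y+1]$; $\Omega=\{\sigma\in\{0,1\}^{\mathbb{Z}^2}: \sigma(u)=\sigma(v)=1,u\ne v\Rightarrow\mathrm{int}(T_u)\cap\mathrm{int}(T_v)=\emptyset\}$. The parity of the tile centered at $(x,y)$ is $(x-1\bmod 2,\,y-1\bmod2)$; its first component is the horizontal parity. $R_{K\times L}=[0,K]\times[0,L]$. Faces are unit squares with integer corners, vacant if in no tile. For a rectangle $\Lambda$, $w_{\Lambda,\lambda}(\sigma)=\lambda^{-\frac14\#\{\text{vacant faces}\subset\Lambda\}}$; $\Omega^{\mathrm{per}}_\Lambda$ = configurations in $\Omega$ periodic under translations by $(\mathrm{Width}\Lambda,0)$ and $(0,\mathrm{Height}\Lambda)$; for an event $E$, $Z^{\mathrm{per}}_{\Lambda,\lambda}(E)=\sum_{\sigma\in E\cap\Omega^{\mathrm{per}}_\Lambda}w_{\Lambda,\lambda}(\sigma)$. *)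

theory Defs
  imports "HOL-Analysis.Analysis"
begin

type_synonym config = "int \<times> int \<Rightarrow> nat"

definition tile :: "int \<times> int \<Rightarrow> (real \<times> real) set" where
  "tile u = {real_of_int (fst u) - 1 .. real_of_int (fst u) + 1} \<times>
            {real_of_int (snd u) - 1 .. real_of_int (snd u) + 1}"

definition Omega :: "config set" where
  "Omega = {\<sigma>. (\<forall>u. \<sigma> u \<in> {0,1}) \<and>
     (\<forall>u v. \<sigma> u = 1 \<and> \<sigma> v = 1 \<and> u \<noteq> v \<longrightarrow> interior (tile u) \<inter> interior (tile v) = {})}"

definition hparity :: "int \<times> int \<Rightarrow> int" where
  "hparity u = (fst u - 1) mod 2"

definition rect :: "nat \<Rightarrow> nat \<Rightarrow> (real \<times> real) set" where
  "rect K L = {0 .. real K} \<times> {0 .. real L}"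

definition face :: "int \<times> int \<Rightarrow> (real \<times> real) set" where
  "face f = {real_of_int (fst f) .. real_of_int (fst f) + 1} \<times>
            {real_of_int (snd f) .. real_of_int (snd f) + 1}"

definition vacant :: "config \<Rightarrow> int \<times> int \<Rightarrow> bool" where
  "vacant \<sigma> f \<longleftrightarrow> \<not> (\<exists>u. \<sigma> u = 1 \<and> face f \<subseteq> tile u)"

definition n_vacant :: "nat \<Rightarrow> nat \<Rightarrow> config \<Rightarrow> nat" where
  "n_vacant K L \<sigma> = card {f. face f \<subseteq> rect K L \<and> vacant \<sigma> f}"

definition weight :: "nat \<Rightarrow> nat \<Rightarrow> real \<Rightarrow> config \<Rightarrow> real" where
  "weight K L lam \<sigma> = lam powr (- (1/4) * real (n_vacant K L \<sigma>))"

definition Omega_per :: "nat \<Rightarrow> nat \<Rightarrow> config set" where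
  "Omega_per K L = {\<sigma> \<in> Omega. \<forall>x y. \<sigma> (x + int K, y) = \<sigma> (x, y) \<and> \<sigma> (x, y + int L) = \<sigma> (x, y)}"

definition Z_per :: "nat \<Rightarrow> nat \<Rightarrow> real \<Rightarrow> config set \<Rightarrow> real" where
  "Z_per K L lam E = (\<Sum>\<sigma> \<in> E \<inter> Omega_per K L. weight K L lam \<sigma>)"

definition E_even_h :: "config set" where
  "E_even_h = {\<sigma>. \<forall>u. \<sigma> u = 1 \<longrightarrow> hparity u = 0}"

end

theory Submission
  imports Defs
begin


definition Tm :: "real \<Rightarrow> bool \<Rightarrow> bool \<Rightarrow> real" where
  "Tm t a b = (if a \<and> b then 0 else if \<not> a \<and> \<not> b then t else 1)"

fun pw :: "real \<Rightarrow> bool \<Rightarrow> bool list \<Rightarrow> real" where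
  "pw t a [] = 1"
| "pw t a (x # xs) = Tm t a x * pw t x xs"

definition H :: "real \<Rightarrow> nat \<Rightarrow> bool \<Rightarrow> bool \<Rightarrow> real" where
  "H t n a b = (\<Sum>xs\<in>{xs. length xs = n}. pw t a (xs @ [b]))"

lemma fin_lists: "finite {xs::bool list. length xs = n}"
  using finite_lists_length_eq[of "UNIV::bool set" n] by simp

lemma sum_lists_Suc:
  "(\<Sum>xs\<in>{xs::bool list. length xs = Suc n}. f xs)
     = (\<Sum>x\<in>UNIV. \<Sum>xs\<in>{xs. length xs = n}. f (x # xs))"
proof -
  have e: "{xs::bool list. length xs = Suc n} = (\<lambda>(x,xs). x # xs) ` (UNIV \<times> {xs. length xs = n})"
    by (auto simp: length_Suc_conv)
  have i: "inj_on (\<lambda>(x,xs). x # (xs::bool list)) (UNIV \<times> {xs. length xs = n})"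
    by (auto simp: inj_on_def)
  show ?thesis unfolding e sum.reindex[OF i]
    by (simp add: sum.cartesian_product case_prod_beta)
qed

lemma H_Suc: "H t (Suc n) a b = (\<Sum>x\<in>UNIV. Tm t a x * H t n x b)"
  unfolding H_def sum_lists_Suc by (simp add: sum_distrib_left)

lemma H_rec: "H t (Suc (Suc n)) a b = t * H t (Suc n) a b + H t n a b"
proof -
  have u: "\<And>f::bool\<Rightarrow>real. (\<Sum>x\<in>UNIV. f x) = f True + f False"
    by (simp add: UNIV_bool)
  show ?thesis
    by (cases a; simp add: H_Suc[of t "Suc n"] H_Suc[of t n] u Tm_def algebra_simps)
qed

lemma H_0: "H t 0 a b = Tm t a b"
  unfolding H_def by simp

definition Q where "Q t n = H t n False False + H t n True True"

lemma Q_closed: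
  fixes t m v :: real
  assumes s: "m + v = t" and p: "m * v = -1"
  shows "Q t n = m ^ Suc n + v ^ Suc n \<and> Q t (Suc n) = m ^ Suc (Suc n) + v ^ Suc (Suc n)"
proof (induction n)
  case 0
  have "H t (Suc 0) False False = t*t + 1" "H t (Suc 0) True True = 1"
    by (simp_all add: H_Suc H_0 UNIV_bool Tm_def)
  moreover have "m ^ 2 + v ^ 2 = t * t + 2"
  proof -
    have "m ^ 2 + v ^ 2 = (m + v) ^ 2 - 2 * (m * v)" by (simp add: power2_eq_square algebra_simps)
    thus ?thesis using s p by (simp add: power2_eq_square)
  qed
  ultimately show ?case using s by (simp add: Q_def H_0 Tm_def power2_eq_square)
next
  case (Suc n)
  have mm: "m^2 = t * m + 1" using s p by (simp add: power2_eq_square algebra_simps flip: s)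
  have vv: "v^2 = t * v + 1" using s p by (simp add: power2_eq_square algebra_simps flip: s)
  have "Q t (Suc (Suc n)) = t * Q t (Suc n) + Q t n"
    by (simp add: Q_def H_rec algebra_simps)
  also have "\<dots> = m ^ (n+1) * (t * m + 1) + v ^ (n+1) * (t * v + 1)"
    using Suc by (simp add: algebra_simps)
  also have "\<dots> = m ^ Suc (Suc (Suc n)) + v ^ Suc (Suc (Suc n))"
    by (simp flip: mm vv add: power2_eq_square)
  finally show ?case using Suc by simp
qed


definition cycw :: "real \<Rightarrow> bool list \<Rightarrow> real" where
  "cycw t s = (\<Prod>i<length s. Tm t (s!i) (s!((i+1) mod length s)))"

lemma pw_prod: "pw t a ys = (\<Prod>i<length ys. Tm t ((a#ys)!i) (ys!i))"
proof (induction ys arbitrary: a)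
  case Nil then show ?case by simp
next
  case (Cons y ys)
  show ?case by (simp only: length_Cons prod.lessThan_Suc_shift) (simp add: Cons)
qed

lemma cycw_Cons: "cycw t (a # xs) = pw t a (xs @ [a])"
  unfolding cycw_def pw_prod
proof (rule prod.cong)
  fix i assume "i \<in> {..<length (xs @ [a])}"
  hence i: "i < Suc (length xs)" by simp
  have 1: "(a # xs) ! i = (a # xs @ [a]) ! i"
    using i by (metis append_Cons nth_append length_Cons)
  have 2: "(a # xs) ! ((i + 1) mod length (a # xs)) = (xs @ [a]) ! i"
  proof (cases "i < length xs")
    case True then show ?thesis by (simp add: nth_append)
  next
    case False then have "i = length xs" using i by simp
    then show ?thesis by simp
  qed
  show "Tm t ((a # xs) ! i) ((a # xs) ! ((i + 1) mod length (a # xs))) =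
        Tm t ((a # xs @ [a]) ! i) ((xs @ [a]) ! i)" using 1 2 by simp
qed simp

lemma cyc_sum: "(\<Sum>s\<in>{s::bool list. length s = Suc n}. cycw t s) = Q t n"
  unfolding sum_lists_Suc cycw_Cons Q_def H_def by (simp add: UNIV_bool)

lemma periodic_int:
  fixes f :: "int \<Rightarrow> 'a"
  assumes "\<And>z. f (z + p) = f z"
  shows "f (z + p*k) = f z"
proof -
  have nat: "f (w + p * int n) = f w" for w n
  proof (induction n)
    case 0 then show ?case by simp
  next
    case (Suc n)
    have "f (w + p * int (Suc n)) = f ((w + p * int n) + p)" by (simp add: algebra_simps)
    also have "\<dots> = f w" using assms Suc by simp
    finally show ?case .
  qed
  show ?thesis
  proof (cases "k \<ge> 0")
    case True then obtain n where "k = int n" by (metis nonneg_eq_int)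
    then show ?thesis using nat by simp
  next
    case False then obtain n where k: "k = - int n" by (metis add.inverse_inverse neg_0_le_iff_le nonneg_eq_int nle_le)
    have "f ((z + p*k) + p * int n) = f (z + p*k)" by (rule nat)
    then show ?thesis using k by (simp add: algebra_simps)
  qed
qed

definition CC :: "nat \<Rightarrow> config set" where "CC L = E_even_h \<inter> Omega_per 2 L"

lemma sig_form:
  assumes "\<sigma> \<in> CC L"
  shows "\<sigma> (x,y) = (if odd x then \<sigma> (1, y mod int L) else 0)"
proof -
  have om: "\<sigma> \<in> Omega" and per: "\<And>x y. \<sigma> (x + 2, y) = \<sigma> (x, y) \<and> \<sigma> (x, y + int L) = \<sigma> (x, y)"
    and ev: "\<And>u. \<sigma> u = 1 \<Longrightarrow> hparity u = 0"
    using assms by (auto simp: CC_def Omega_per_def E_even_h_def)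
  have "\<sigma> (x,y) \<in> {0,1}" using om by (simp add: Omega_def)
  show ?thesis
  proof (cases "odd x")
    case True
    have "\<sigma> (x, y) = \<sigma> (x mod 2 + 2 * (x div 2), y)" by simp
    also have "\<dots> = \<sigma> (x mod 2, y)"
      using periodic_int[of "\<lambda>z. \<sigma> (z, y)" 2 "x mod 2" "x div 2"] per by simp
    also have "\<dots> = \<sigma> (1, y)" using True by (simp add: odd_iff_mod_2_eq_one)
    also have "\<dots> = \<sigma> (1, y mod int L + int L * (y div int L))" by simp
    also have "\<dots> = \<sigma> (1, y mod int L)"
      using periodic_int[of "\<lambda>z. \<sigma> (1, z)" "int L" "y mod int L" "y div int L"] per by simp
    finally show ?thesis using True by simp
  next
    case False
    have "\<sigma> (x,y) \<noteq> 1"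
    proof
      assume "\<sigma> (x,y) = 1"
      then have "(x - 1) mod 2 = 0" using ev[of "(x,y)"] by (simp add: hparity_def)
      then show False using False by presburger
    qed
    then show ?thesis using False \<open>\<sigma> (x,y) \<in> {0,1}\<close> by auto
  qed
qed

lemma tile_overlap:
  "interior (tile u) \<inter> interior (tile v) \<noteq> {} \<longleftrightarrow> \<bar>fst u - fst v\<bar> < 2 \<and> \<bar>snd u - snd v\<bar> < 2"
proof
  assume "interior (tile u) \<inter> interior (tile v) \<noteq> {}"
  then obtain p q where "(p,q) \<in> interior (tile u)" "(p,q) \<in> interior (tile v)" by auto
  then have "real_of_int (fst u) - 1 < p" "p < real_of_int (fst u) + 1"
    "real_of_int (fst v) - 1 < p" "p < real_of_int (fst v) + 1"
    "real_of_int (snd u) - 1 < q" "q < real_of_int (snd u) + 1"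
    "real_of_int (snd v) - 1 < q" "q < real_of_int (snd v) + 1"
    by (auto simp: tile_def interior_Times)
  then have "real_of_int (fst u - fst v) < 2" "real_of_int (fst v - fst u) < 2"
    "real_of_int (snd u - snd v) < 2" "real_of_int (snd v - snd u) < 2" by auto
  then have "fst u - fst v < 2" "fst v - fst u < 2" "snd u - snd v < 2" "snd v - snd u < 2"
    by linarith+
  then show "\<bar>fst u - fst v\<bar> < 2 \<and> \<bar>snd u - snd v\<bar> < 2" by auto
next
  assume a: "\<bar>fst u - fst v\<bar> < 2 \<and> \<bar>snd u - snd v\<bar> < 2"
  let ?p = "(real_of_int (fst u) + real_of_int (fst v)) / 2"
  let ?q = "(real_of_int (snd u) + real_of_int (snd v)) / 2"
  have "fst u - fst v < 2" "fst v - fst u < 2" "snd u - snd v < 2" "snd v - snd u < 2"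
    using a by auto
  then have "real_of_int (fst u) - real_of_int (fst v) < 2" "real_of_int (fst v) - real_of_int (fst u) < 2"
     "real_of_int (snd u) - real_of_int (snd v) < 2" "real_of_int (snd v) - real_of_int (snd u) < 2"
    by (simp_all flip: of_int_diff)
  then have "(?p, ?q) \<in> interior (tile u) \<inter> interior (tile v)"
    by (auto simp: tile_def interior_Times)
  then show "interior (tile u) \<inter> interior (tile v) \<noteq> {}" by blast
qed


definition phi :: "nat \<Rightarrow> config \<Rightarrow> bool list" where
  "phi L \<sigma> = map (\<lambda>i. \<sigma> (1, int i) = 1) [0..<L]"

lemma Tm_prod:
  assumes "finite I"
  shows "(\<Prod>i\<in>I. Tm t (A i) (B i)) = (if \<exists>i\<in>I. A i \<and> B i then 0 else t ^ card {i\<in>I. \<not> A i \<and> \<not> B i})"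
proof (cases "\<exists>i\<in>I. A i \<and> B i")
  case True
  then show ?thesis using assms by (auto simp: Tm_def intro!: prod_zero)
next
  case False
  have "(\<Prod>i\<in>I. Tm t (A i) (B i)) = (\<Prod>i\<in>I. if \<not> A i \<and> \<not> B i then t else 1)"
    using False by (intro prod.cong) (auto simp: Tm_def)
  also have "\<dots> = t ^ card {i\<in>I. \<not> A i \<and> \<not> B i}"
    using assms by (simp add: prod.If_cases Int_def)
  finally have "(\<Prod>i\<in>I. Tm t (A i) (B i)) = t ^ card {i\<in>I. \<not> A i \<and> \<not> B i}" .
  then show ?thesis by (simp only: if_not_P[OF False])
qed

lemma nat_mod_lt: "0 < L \<Longrightarrow> nat (y mod int L) < L"
  using pos_mod_bound[of "int L" y] pos_mod_sign[of "int L" y] by (simp add: nat_less_iff)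

lemma omega_vals: "\<sigma> \<in> CC L \<Longrightarrow> \<sigma> u \<in> {0,1}"
  by (cases u) (auto simp: CC_def Omega_per_def Omega_def)

lemma phi_inj: assumes "L > 0" shows "inj_on (phi L) (CC L)"
proof (rule inj_onI)
  fix \<sigma> \<tau> assume s: "\<sigma> \<in> CC L" and t: "\<tau> \<in> CC L" and e: "phi L \<sigma> = phi L \<tau>"
  show "\<sigma> = \<tau>"
  proof (rule ext)
    fix u :: "int \<times> int"
    obtain x y where u: "u = (x,y)" by fastforce
    show "\<sigma> u = \<tau> u"
    proof (cases "odd x")
      case True
      show ?thesis
      proof -
        have False: "L \<noteq> 0" using \<open>L > 0\<close> by simp
        define i where "i = nat (y mod int L)"
        have iL: "i < L" and ii: "int i = y mod int L" using False nat_mod_lt[of L y] by (auto simp: i_def)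
        have "phi L \<sigma> ! i = phi L \<tau> ! i" using e by simp
        then have "(\<sigma> (1, int i) = 1) = (\<tau> (1, int i) = 1)" using iL by (simp add: phi_def)
        moreover have "\<sigma> (1, int i) \<in> {0,1}" "\<tau> (1, int i) \<in> {0,1}"
          using omega_vals s t by auto
        ultimately have "\<sigma> (1, int i) = \<tau> (1, int i)" by auto
        then show ?thesis using sig_form[OF s, of x y] sig_form[OF t, of x y] u True ii by simp
      qed
    next
      case False
      then show ?thesis using sig_form[OF s, of x y] sig_form[OF t, of x y] u by simp
    qed
  qed
qed


lemma box_sub:
  fixes a b c d a' b' c' d' :: real
  assumes "a \<le> b" "c \<le> d"
  shows "({a..b} \<times> {c..d} \<subseteq> {a'..b'} \<times> {c'..d'}) \<longleftrightarrow> (a' \<le> a \<and> b \<le> b' \<and> c' \<le> c \<and> d \<le> d')"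
proof
  assume h: "{a..b} \<times> {c..d} \<subseteq> {a'..b'} \<times> {c'..d'}"
  have "(a,c) \<in> {a..b} \<times> {c..d}" "(b,d) \<in> {a..b} \<times> {c..d}" using assms by auto
  then have "(a,c) \<in> {a'..b'} \<times> {c'..d'}" "(b,d) \<in> {a'..b'} \<times> {c'..d'}"
    using h by blast+
  then show "a' \<le> a \<and> b \<le> b' \<and> c' \<le> c \<and> d \<le> d'" by auto
qed auto

lemma face_rect:
  "face f \<subseteq> rect 2 L \<longleftrightarrow> 0 \<le> fst f \<and> fst f \<le> 1 \<and> 0 \<le> snd f \<and> snd f + 1 \<le> int L"
proof -
  have "face f \<subseteq> rect 2 L \<longleftrightarrow> 0 \<le> real_of_int (fst f) \<and> real_of_int (fst f) + 1 \<le> 2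
      \<and> 0 \<le> real_of_int (snd f) \<and> real_of_int (snd f) + 1 \<le> real L"
    unfolding face_def rect_def by (subst box_sub) auto
  also have "\<dots> \<longleftrightarrow> 0 \<le> fst f \<and> fst f \<le> 1 \<and> 0 \<le> snd f \<and> snd f + 1 \<le> int L"
    by linarith
  finally show ?thesis .
qed

lemma face_tile:
  "face f \<subseteq> tile u \<longleftrightarrow> fst u - 1 \<le> fst f \<and> fst f \<le> fst u \<and> snd u - 1 \<le> snd f \<and> snd f \<le> snd u"
proof -
  have "face f \<subseteq> tile u \<longleftrightarrow> real_of_int (fst u) - 1 \<le> real_of_int (fst f) \<and> real_of_int (fst f) + 1 \<le> real_of_int (fst u) + 1
      \<and> real_of_int (snd u) - 1 \<le> real_of_int (snd f) \<and> real_of_int (snd f) + 1 \<le> real_of_int (snd u) + 1"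
    unfolding face_def tile_def by (subst box_sub) auto
  also have "\<dots> \<longleftrightarrow> fst u - 1 \<le> fst f \<and> fst f \<le> fst u \<and> snd u - 1 \<le> snd f \<and> snd f \<le> snd u"
    by linarith
  finally show ?thesis .
qed

lemma vac_iff:
  assumes s: "\<sigma> \<in> CC L" and b: "0 \<le> b" "b < int L" and a: "0 \<le> a" "a \<le> 1"
  shows "vacant \<sigma> (a,b) \<longleftrightarrow> \<sigma> (1,b) \<noteq> 1 \<and> \<sigma> (1, (b+1) mod int L) \<noteq> 1"
proof
  assume v: "vacant \<sigma> (a,b)"
  show "\<sigma> (1,b) \<noteq> 1 \<and> \<sigma> (1, (b+1) mod int L) \<noteq> 1"
  proof
    show "\<sigma> (1,b) \<noteq> 1"
    proof
      assume "\<sigma> (1,b) = 1"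
      moreover have "face (a,b) \<subseteq> tile (1,b)" using a by (simp add: face_tile)
      ultimately show False using v by (auto simp: vacant_def)
    qed
    show "\<sigma> (1, (b+1) mod int L) \<noteq> 1"
    proof
      assume h: "\<sigma> (1, (b+1) mod int L) = 1"
      have "\<sigma> (1, b+1) = \<sigma> (1, (b+1) mod int L)" using sig_form[OF s, of 1 "b+1"] by simp
      moreover have "face (a,b) \<subseteq> tile (1,b+1)" using a by (simp add: face_tile)
      ultimately show False using v h by (auto simp: vacant_def)
    qed
  qed
next
  assume h: "\<sigma> (1,b) \<noteq> 1 \<and> \<sigma> (1, (b+1) mod int L) \<noteq> 1"
  show "vacant \<sigma> (a,b)"
    unfolding vacant_def
  proof
    assume "\<exists>u. \<sigma> u = 1 \<and> face (a, b) \<subseteq> tile u"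
    then obtain x y where u: "\<sigma> (x,y) = 1" "face (a, b) \<subseteq> tile (x,y)" by auto
    have xy: "x - 1 \<le> a" "a \<le> x" "y - 1 \<le> b" "b \<le> y" using u(2) by (auto simp: face_tile)
    have "odd x \<and> \<sigma> (1, y mod int L) = 1" using u(1) sig_form[OF s, of x y]
      by (auto split: if_splits)
    moreover have "y = b \<or> y = b + 1" using xy by auto
    moreover have "b mod int L = b" using b by simp
    ultimately show False using h by auto
  qed
qed

definition Vset :: "nat \<Rightarrow> config \<Rightarrow> nat set" where
  "Vset L \<sigma> = {i. i < L \<and> \<not> (\<sigma> (1, int i) = 1) \<and> \<not> (\<sigma> (1, int ((i+1) mod L)) = 1)}"

lemma nvac:
  assumes s: "\<sigma> \<in> CC L"
  shows "n_vacant 2 L \<sigma> = 2 * card (Vset L \<sigma>)"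
proof -
  define Vi where "Vi = {b. 0 \<le> b \<and> b < int L \<and> \<sigma> (1,b) \<noteq> 1 \<and> \<sigma> (1, (b+1) mod int L) \<noteq> 1}"
  have F: "{f. face f \<subseteq> rect 2 L \<and> vacant \<sigma> f} = {0,1} \<times> Vi"
  proof (rule set_eqI)
    fix f :: "int \<times> int"
    obtain a b where f: "f = (a,b)" by fastforce
    show "f \<in> {f. face f \<subseteq> rect 2 L \<and> vacant \<sigma> f} \<longleftrightarrow> f \<in> {0,1} \<times> Vi"
    proof
      assume "f \<in> {f. face f \<subseteq> rect 2 L \<and> vacant \<sigma> f}"
      then have r: "0 \<le> a" "a \<le> 1" "0 \<le> b" "b + 1 \<le> int L" and "vacant \<sigma> (a,b)"
        using f by (auto simp: face_rect)
      then have "\<sigma> (1,b) \<noteq> 1 \<and> \<sigma> (1, (b+1) mod int L) \<noteq> 1"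
        using vac_iff[OF s, of b a] by auto
      moreover have "a \<in> {0,1}" using r by auto
      ultimately show "f \<in> {0,1} \<times> Vi" using f r by (auto simp: Vi_def)
    next
      assume "f \<in> {0,1} \<times> Vi"
      then have r: "0 \<le> a" "a \<le> 1" "0 \<le> b" "b + 1 \<le> int L"
        and h: "\<sigma> (1,b) \<noteq> 1 \<and> \<sigma> (1, (b+1) mod int L) \<noteq> 1"
        using f by (auto simp: Vi_def)
      then have "vacant \<sigma> (a,b)" using vac_iff[OF s, of b a] by auto
      then show "f \<in> {f. face f \<subseteq> rect 2 L \<and> vacant \<sigma> f}" using f r by (auto simp: face_rect)
    qed
  qed
  have V: "Vi = int ` Vset L \<sigma>"
  proof (rule set_eqI)
    fix b :: int
    show "b \<in> Vi \<longleftrightarrow> b \<in> int ` Vset L \<sigma>"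
    proof
      assume "b \<in> Vi"
      then have "b = int (nat b)" "nat b \<in> Vset L \<sigma>"
        by (auto simp: Vi_def Vset_def zmod_int add.commute)
      then show "b \<in> int ` Vset L \<sigma>" by blast
    next
      assume "b \<in> int ` Vset L \<sigma>"
      then show "b \<in> Vi" by (auto simp: Vi_def Vset_def zmod_int ac_simps)
    qed
  qed
  have "n_vacant 2 L \<sigma> = card ({0::int,1} \<times> Vi)" unfolding n_vacant_def F ..
  also have "\<dots> = 2 * card Vi" by (simp add: card_cartesian_product)
  also have "card Vi = card (Vset L \<sigma>)" unfolding V by (simp add: card_image)
  finally show ?thesis .
qed


lemma phi_nth: "i < L \<Longrightarrow> phi L \<sigma> ! i = (\<sigma> (1, int i) = 1)"
  by (simp add: phi_def)

lemma no_adj: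
  assumes s: "\<sigma> \<in> CC L" and L: "L \<ge> 2" and i: "i < L"
  shows "\<not> (\<sigma> (1, int i) = 1 \<and> \<sigma> (1, int ((i+1) mod L)) = 1)"
proof
  assume h: "\<sigma> (1, int i) = 1 \<and> \<sigma> (1, int ((i+1) mod L)) = 1"
  have "\<sigma> (1, int i + 1) = \<sigma> (1, (int i + 1) mod int L)" using sig_form[OF s, of 1 "int i + 1"] by simp
  also have "(int i + 1) mod int L = int ((i+1) mod L)" by (simp add: zmod_int add.commute)
  finally have h2: "\<sigma> (1, int i + 1) = 1" using h by simp
  have om: "\<sigma> \<in> Omega" using s by (simp add: CC_def Omega_per_def)
  have "interior (tile (1, int i)) \<inter> interior (tile (1, int i + 1)) = {}"
    using om h h2 unfolding Omega_def by auto
  moreover have "interior (tile (1, int i)) \<inter> interior (tile (1, int i + 1)) \<noteq> {}"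
    by (subst tile_overlap) simp
  ultimately show False by simp
qed

lemma weight_eq:
  assumes s: "\<sigma> \<in> CC L" and L: "L \<ge> 2" and lam: "lam > 0"
  shows "weight 2 L lam \<sigma> = cycw (lam powr (-1/2)) (phi L \<sigma>)"
proof -
  define t where "t = lam powr (-1/2)"
  have "cycw t (phi L \<sigma>) = (\<Prod>i<L. Tm t (\<sigma> (1, int i) = 1) (\<sigma> (1, int ((i+1) mod L)) = 1))"
    unfolding cycw_def
  proof (rule prod.cong)
    fix i assume "i \<in> {..<L}"
    then have i: "i < L" by simp
    have "(i+1) mod L < L" using L by simp
    then show "Tm t (phi L \<sigma> ! i) (phi L \<sigma> ! ((i + 1) mod length (phi L \<sigma>))) =
          Tm t (\<sigma> (1, int i) = 1) (\<sigma> (1, int ((i + 1) mod L)) = 1)"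
      using i by (simp add: phi_def)
  qed (simp add: phi_def)
  also have "\<dots> = t ^ card (Vset L \<sigma>)"
  proof -
    have "{i \<in> {..<L}. \<not> \<sigma> (1, int i) = 1 \<and> \<not> \<sigma> (1, int ((i+1) mod L)) = 1} = Vset L \<sigma>"
      by (auto simp: Vset_def)
    then show ?thesis using no_adj[OF s L] by (subst Tm_prod) auto
  qed
  finally have c: "cycw t (phi L \<sigma>) = t ^ card (Vset L \<sigma>)" .
  have "weight 2 L lam \<sigma> = lam powr (- (1/4) * real (2 * card (Vset L \<sigma>)))"
    by (simp add: weight_def nvac[OF s])
  also have "\<dots> = lam powr ((-1/2) * real (card (Vset L \<sigma>)))" by simp
  also have "\<dots> = t powr real (card (Vset L \<sigma>))" by (simp add: t_def powr_powr)
  also have "\<dots> = t ^ card (Vset L \<sigma>)" using lam by (simp add: t_def powr_realpow)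
  finally show ?thesis using c by (simp add: t_def)
qed

lemma exists_sigma:
  assumes len: "length s = L" and L: "L \<ge> 2" and na: "\<forall>i<L. \<not> (s!i \<and> s!((i+1) mod L))"
  shows "s \<in> phi L ` CC L"
proof -
  define \<sigma> :: config where "\<sigma> = (\<lambda>(x,y). if odd x \<and> s!(nat (y mod int L)) then 1 else 0)"
  have adj: "\<not> (s!(nat (y mod int L)) \<and> s!(nat ((y+1) mod int L)))" for y
  proof -
    define i where "i = nat (y mod int L)"
    have i: "i < L" using nat_mod_lt[of L y] L by (simp add: i_def)
    have "int ((i+1) mod L) = (int i + 1) mod int L" by (simp add: zmod_int add.commute)
    also have "\<dots> = (y mod int L + 1) mod int L" using L by (simp add: i_def)
    also have "\<dots> = (y + 1) mod int L" by (simp add: mod_add_left_eq)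
    finally have "nat ((y+1) mod int L) = (i+1) mod L" by simp
    then show ?thesis using na i by (simp add: i_def)
  qed
  have E: "\<sigma> \<in> E_even_h"
    unfolding E_even_h_def
  proof (intro CollectI allI impI)
    fix u assume "\<sigma> u = 1"
    then have "odd (fst u)" by (cases u) (auto simp: \<sigma>_def split: if_splits)
    then show "hparity u = 0" unfolding hparity_def by presburger
  qed
  have O: "\<sigma> \<in> Omega"
    unfolding Omega_def
  proof (intro CollectI conjI allI impI)
    fix u show "\<sigma> u \<in> {0,1}" by (cases u) (simp add: \<sigma>_def)
  next
    fix u v assume h: "\<sigma> u = 1 \<and> \<sigma> v = 1 \<and> u \<noteq> v"
    obtain x y where u: "u = (x,y)" by fastforce
    obtain x' y' where v: "v = (x',y')" by fastforce
    have hu: "odd x" "s!(nat (y mod int L))" and hv: "odd x'" "s!(nat (y' mod int L))"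
      using h u v by (auto simp: \<sigma>_def split: if_splits)
    show "interior (tile u) \<inter> interior (tile v) = {}"
    proof (rule ccontr)
      assume "interior (tile u) \<inter> interior (tile v) \<noteq> {}"
      then have d: "\<bar>x - x'\<bar> < 2" "\<bar>y - y'\<bar> < 2" using u v tile_overlap by auto
      then have "x = x'" using hu hv by presburger
      then have "y \<noteq> y'" using h u v by auto
      then have "y' = y + 1 \<or> y = y' + 1" using d by auto
      then show False using adj[of y] adj[of y'] hu hv by auto
    qed
  qed
  have P: "\<sigma> \<in> Omega_per 2 L"
    using O by (simp add: Omega_per_def \<sigma>_def)
  have "phi L \<sigma> = s"
  proof (rule nth_equalityI)
    show "length (phi L \<sigma>) = length s" using len by (simp add: phi_def)
  next
    fix i assume "i < length (phi L \<sigma>)"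
    then have i: "i < L" by (simp add: phi_def)
    have "int i mod int L = int i" using i by simp
    then show "phi L \<sigma> ! i = s ! i" using i by (simp add: phi_nth \<sigma>_def)
  qed
  moreover have "\<sigma> \<in> CC L" using E P by (simp add: CC_def)
  ultimately show ?thesis by blast
qed


lemma cycw_nz:
  assumes "length s = L" "L \<ge> 2" "cycw t s \<noteq> 0"
  shows "s \<in> phi L ` CC L"
proof (rule exists_sigma[OF assms(1,2)])
  have "cycw t s = (if \<exists>i\<in>{..<L}. s!i \<and> s!((i+1) mod L) then 0 else
          t ^ card {i\<in>{..<L}. \<not> s!i \<and> \<not> s!((i+1) mod L)})"
    unfolding cycw_def using assms(1) by (subst Tm_prod) auto
  then show "\<forall>i<L. \<not> (s!i \<and> s!((i+1) mod L))" using assms(3) by (auto split: if_splits)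
qed

theorem proposition4p2:
  fixes lam :: real and L :: nat
  assumes "lam > 0" and "even L" and "L \<ge> 2"
  shows "Z_per 2 L lam E_even_h \<ge> (1 + (1/2) * lam powr (-1/2)) ^ L"
proof -
  define t where "t = lam powr (-1/2)"
  have tpos: "t > 0" using assms(1) by (simp add: t_def)
  have "Z_per 2 L lam E_even_h = sum (weight 2 L lam) (CC L)"
    by (simp add: Z_per_def CC_def)
  also have "\<dots> = sum (cycw t \<circ> phi L) (CC L)"
    using weight_eq[OF _ assms(3) assms(1)] by (intro sum.cong) (auto simp: t_def)
  also have "\<dots> = sum (cycw t) (phi L ` CC L)"
    using phi_inj[of L] assms(3) by (simp add: sum.reindex)
  also have "\<dots> = sum (cycw t) {s. length s = L}"
  proof (rule sum.mono_neutral_left)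
    show "finite {s::bool list. length s = L}" by (rule fin_lists)
    show "phi L ` CC L \<subseteq> {s. length s = L}" by (auto simp: phi_def)
    show "\<forall>i\<in>{s. length s = L} - phi L ` CC L. cycw t i = 0"
      using cycw_nz[OF _ assms(3)] by blast
  qed
  also have "\<dots> = Q t (L - 1)"
    using cyc_sum[where n="L - 1" and t=t] assms(3) by simp
  finally have Z: "Z_per 2 L lam E_even_h = Q t (L - 1)" .
  define r where "r = sqrt (t^2 + 4)"
  define m where "m = (t + r) / 2"
  define v where "v = (t - r) / 2"
  have r2: "r^2 = t^2 + 4" unfolding r_def by simp
  have s: "m + v = t" by (simp add: m_def v_def field_simps)
  have p: "m * v = -1"
  proof -
    have "m * v = (t^2 - r^2) / 4" by (simp add: m_def v_def power2_eq_square algebra_simps)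
    then show ?thesis using r2 by simp
  qed
  have Q: "Q t (L - 1) = m ^ L + v ^ L"
    using Q_closed[OF s p, of "L - 1"] assms(3) by simp
  have "r \<ge> 2"
  proof -
    have "sqrt 4 \<le> r" unfolding r_def by (rule real_sqrt_le_mono) simp
    then show ?thesis by simp
  qed
  then have "1 + (1/2) * t \<le> m" by (simp add: m_def)
  moreover have "0 \<le> 1 + (1/2) * t" using tpos by simp
  ultimately have "(1 + (1/2) * t) ^ L \<le> m ^ L" by (rule power_mono)
  also have "\<dots> \<le> m ^ L + v ^ L" using assms(2) by (simp add: zero_le_even_power)
  finally show ?thesis using Z Q by (simp add: t_def)
qed

end
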